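(* For $n\ge 1$ and $0<z<1/n$ let $q_n(z) = \sum_{\pi\in S_n} z^{t(\pi)}$. Then \[ q_n(z) = O(\sqrt{n})\,\frac{e^{-n}}{(1-zn)^{1/z}}, \] i.e. there is an absolute constant $C$ such that $q_n(z) \le C\sqrt{n}\,e^{-n}(1-zn)^{-1/z}$ for all $n\ge1$ and $0<z<1/n$.
   Context: For $\pi\in S_n$, $t(\pi)$ is the minimum number of transpositions whose product is $\pi$; equivalently $t(\pi)=s(\pi)-c(\pi)$ where $s(\pi)$ is the number of points moved by $\pi$ and $c(\pi)$ the number of its cycles of length at least 2. *)

theory Defs
  imports "HOL-Analysis.Analysis" "HOL-Combinatorics.Combinatorics"
begin

definition tcount :: "(nat \<Rightarrow> nat) \<Rightarrow> nat" where
  "tcount p = (LEAST k. \<exists>ts :: (nat \<times> nat) list.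
      length ts = k \<and> (\<forall>(a,b)\<in>set ts. a \<noteq> b) \<and>
      p = foldr (\<lambda>(a,b) f. Transposition.transpose a b \<circ> f) ts id)"

definition qpoly :: "nat \<Rightarrow> real \<Rightarrow> real" where
  "qpoly n z = (\<Sum>p\<in>{p. p permutes {1..n}}. z ^ tcount p)"

end

theory Submission
  imports Defs
begin

fun hcnt :: "nat \<Rightarrow> (nat \<Rightarrow> nat) \<Rightarrow> nat" where
  "hcnt 0 p = 0"
| "hcnt (Suc m) p = hcnt m (Transposition.transpose m (p m) \<circ> p) + (if p m = m then 0 else 1)"

lemma fix_step:
  assumes "inj p" "\<forall>x\<ge>Suc M. p x = x"
  shows "inj (Transposition.transpose M (p M) \<circ> p)"
    "\<forall>x\<ge>M. (Transposition.transpose M (p M) \<circ> p) x = x"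
proof -
  show "inj (Transposition.transpose M (p M) \<circ> p)"
    using assms(1) by (simp add: inj_compose)
  show "\<forall>x\<ge>M. (Transposition.transpose M (p M) \<circ> p) x = x"
  proof (intro allI impI)
    fix x assume x: "M \<le> x"
    show "(Transposition.transpose M (p M) \<circ> p) x = x"
    proof (cases "x = M")
      case True then show ?thesis by (simp add: Transposition.transpose_def)
    next
      case False
      then have px: "p x = x" using assms(2) x by auto
      have "p M \<noteq> x" using False assms(1) px by (metis injD)
      then show ?thesis using False px by (simp add: Transposition.transpose_def)
    qed
  qed
qed

lemma tr_comm: "a \<noteq> M \<Longrightarrow> b \<noteq> M \<Longrightarrow> Transposition.transpose M (Transposition.transpose a b c) (Transposition.transpose a b y)
        = Transposition.transpose a b (Transposition.transpose M c y)"
  unfolding Transposition.transpose_def by (smt (verit))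

lemma hcnt_key:
  "a < N \<Longrightarrow> b < N \<Longrightarrow> inj p \<Longrightarrow> \<forall>x\<ge>N. p x = x \<Longrightarrow>
   hcnt N (Transposition.transpose a b \<circ> p) \<le> hcnt N p + 1"
proof (induction N arbitrary: a b p)
  case 0 then show ?case by simp
next
  case (Suc M)
  let ?c = "p M"
  let ?q = "Transposition.transpose M ?c \<circ> p"
  have q: "inj ?q" "\<forall>x\<ge>M. ?q x = x" using fix_step[OF Suc.prems(3,4)] by auto
  have cN: "?c < Suc M"
  proof (rule ccontr)
    assume "\<not> ?c < Suc M"
    then have "p ?c = ?c" using Suc.prems(4) by auto
    then have "?c = M" using Suc.prems(3) by (metis injD)
    then show False using \<open>\<not> ?c < Suc M\<close> by simp
  qed
  have gen: "hcnt (Suc M) (Transposition.transpose a b \<circ> p) \<le> hcnt (Suc M) p + 1"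
    if ab: "a < Suc M" "b < Suc M" "b \<noteq> M" for a b
  proof (cases "a = M")
    case False
    then have aM: "a < M" "b < M" using ab by auto
    have eq0: "Transposition.transpose M (Transposition.transpose a b c) (Transposition.transpose a b y)
        = Transposition.transpose a b (Transposition.transpose M c y)" for c y
      using False ab(3) by (rule tr_comm)
    have eq: "Transposition.transpose M (Transposition.transpose a b ?c) \<circ> (Transposition.transpose a b \<circ> p)
        = Transposition.transpose a b \<circ> ?q"
      using eq0 by (simp add: fun_eq_iff)
    have ind: "(Transposition.transpose a b ?c = M) = (?c = M)"
      using False ab(3) by (auto simp: Transposition.transpose_def)
    have "hcnt M (Transposition.transpose a b \<circ> ?q) \<le> hcnt M ?q + 1"
      using Suc.IH[OF aM q] .
    then show ?thesis using eq ind by simp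
  next
    case True
    show ?thesis
    proof (cases "?c = M")
      case c: True
      have "Transposition.transpose M b \<circ> (Transposition.transpose M b \<circ> p) = p"
        by (auto simp: fun_eq_iff Transposition.transpose_def)
      then show ?thesis using True c ab by (simp add: Transposition.transpose_def)
    next
      case c: False
      show ?thesis
      proof (cases "?c = b")
        case cb: True
        then have "(Transposition.transpose a b \<circ> p) M = M" using True by (simp add: Transposition.transpose_def)
        then show ?thesis using True cb c by simp
      next
        case cb: False
        have cM: "?c < M" using cN c by simp
        have v: "(Transposition.transpose a b \<circ> p) M = ?c" using True cb c by (simp add: Transposition.transpose_def)
        have eq: "Transposition.transpose M ?c \<circ> (Transposition.transpose M b \<circ> p)
            = Transposition.transpose b ?c \<circ> ?q"
          using cb c ab(3) by (auto simp: fun_eq_iff Transposition.transpose_def)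
        have "hcnt M (Transposition.transpose b ?c \<circ> ?q) \<le> hcnt M ?q + 1"
          using Suc.IH[OF _ cM q] ab by (metis less_antisym)
        then show ?thesis using eq v True c by simp
      qed
    qed
  qed
  show ?case
  proof (cases "b = M")
    case False then show ?thesis using gen Suc.prems by blast
  next
    case True
    show ?thesis
    proof (cases "a = M")
      case True then show ?thesis using \<open>b = M\<close> by simp
    next
      case False
      have "hcnt (Suc M) (Transposition.transpose b a \<circ> p) \<le> hcnt (Suc M) p + 1"
        using gen[of b a] Suc.prems(1,2) False by blast
      then show ?thesis by (simp only: transpose_commute)
    qed
  qed
qed

definition tprod :: "(nat \<times> nat) list \<Rightarrow> nat \<Rightarrow> nat" where
  "tprod ts = foldr (\<lambda>(a,b) f. Transposition.transpose a b \<circ> f) ts id"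

lemma tprod_Cons [simp]: "tprod ((a,b) # ts) = Transposition.transpose a b \<circ> tprod ts"
  by (simp add: tprod_def)

lemma tprod_Nil [simp]: "tprod [] = id"
  by (simp add: tprod_def)

lemma tprod_props:
  assumes "\<forall>(a,b)\<in>set ts. a < N \<and> b < N"
  shows "inj (tprod ts) \<and> (\<forall>x\<ge>N. tprod ts x = x)"
  using assms
proof (induction ts)
  case Nil then show ?case by simp
next
  case (Cons ab ts)
  obtain a b where ab: "ab = (a,b)" by fastforce
  have ih: "inj (tprod ts)" "\<forall>x\<ge>N. tprod ts x = x" using Cons by auto
  have "a < N" "b < N" using Cons.prems ab by auto
  have "inj (Transposition.transpose a b \<circ> tprod ts)" using inj_compose[OF inj_transpose ih(1)] .
  moreover have "\<forall>x\<ge>N. (Transposition.transpose a b \<circ> tprod ts) x = x"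
    using ih(2) \<open>a < N\<close> \<open>b < N\<close> by (auto simp: Transposition.transpose_def)
  ultimately show ?case using ab by (simp add: comp_def)
qed

lemma hcnt_le_length:
  assumes "\<forall>(a,b)\<in>set ts. a < N \<and> b < N"
  shows "hcnt N (tprod ts) \<le> length ts"
  using assms
proof (induction ts)
  case Nil
  have "hcnt N id = 0"
  proof (induction N)
    case (Suc N) then show ?case by simp
  qed simp
  then show ?case by (simp add: id_def)
next
  case (Cons ab ts)
  obtain a b where ab: "ab = (a,b)" by fastforce
  have pr: "\<forall>(a,b)\<in>set ts. a < N \<and> b < N" using Cons.prems by auto
  have ih: "hcnt N (tprod ts) \<le> length ts" using Cons.IH pr by simp
  have "a < N" "b < N" using Cons.prems ab by auto
  then have "hcnt N (Transposition.transpose a b \<circ> tprod ts) \<le> hcnt N (tprod ts) + 1"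
    using hcnt_key tprod_props[OF pr] by blast
  then show ?case using ih ab by (simp add: comp_def)
qed

lemma hcnt_stable:
  assumes "\<forall>x\<ge>N. p x = x"
  shows "hcnt (N + k) p = hcnt N p"
proof (induction k)
  case (Suc k)
  have "p (N + k) = N + k" using assms by simp
  then show ?case using Suc by simp
qed simp

lemma hcnt_exists:
  "inj p \<Longrightarrow> \<forall>x\<ge>N. p x = x \<Longrightarrow>
   \<exists>ts. length ts = hcnt N p \<and> (\<forall>(a,b)\<in>set ts. a \<noteq> b) \<and> p = tprod ts"
proof (induction N arbitrary: p)
  case 0
  then have "p = id" by auto
  then show ?case by (intro exI[of _ "[]"]) simp
next
  case (Suc M)
  let ?q = "Transposition.transpose M (p M) \<circ> p"
  have q: "inj ?q" "\<forall>x\<ge>M. ?q x = x" using fix_step[OF Suc.prems] by auto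
  obtain ts where ts: "length ts = hcnt M ?q" "\<forall>(a,b)\<in>set ts. a \<noteq> b" "?q = tprod ts"
    using Suc.IH[OF q] by blast
  have pq: "p = Transposition.transpose M (p M) \<circ> ?q"
    by (auto simp: fun_eq_iff Transposition.transpose_def)
  show ?case
  proof (cases "p M = M")
    case True
    then show ?thesis using ts by (intro exI[of _ ts]) simp
  next
    case False
    show ?thesis
      apply (intro exI[of _ "(M, p M) # ts"])
      using ts False pq by auto
  qed
qed

lemma tcount_ge:
  assumes "p permutes {1..n}"
  shows "hcnt (Suc n) p \<le> tcount p"
proof -
  have fx: "\<forall>x\<ge>Suc n. p x = x" using assms by (auto simp: permutes_def)
  have ip: "inj p" using assms permutes_inj by blast
  obtain ts0 where "length ts0 = hcnt (Suc n) p \<and> (\<forall>(a,b)\<in>set ts0. a \<noteq> b) \<and> p = tprod ts0"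
    using hcnt_exists[OF ip fx] by blast
  then have ex: "\<exists>k ts. length ts = k \<and> (\<forall>(a,b)\<in>set ts. a \<noteq> b) \<and>
      p = foldr (\<lambda>(a,b) f. Transposition.transpose a b \<circ> f) ts id"
    unfolding tprod_def by blast
  obtain ts where ts: "length ts = tcount p" "p = tprod ts"
    using LeastI_ex[OF ex] unfolding tcount_def tprod_def by blast
  define N where "N = Suc n + Suc (Max (insert 0 (fst ` set ts \<union> snd ` set ts)))"
  have fin: "finite (insert 0 (fst ` set ts \<union> snd ` set ts))" by simp
  have bd: "\<forall>(a,b)\<in>set ts. a < N \<and> b < N"
  proof (intro ballI, clarify)
    fix a b assume "(a,b) \<in> set ts"
    then have "a \<le> Max (insert 0 (fst ` set ts \<union> snd ` set ts))"
      "b \<le> Max (insert 0 (fst ` set ts \<union> snd ` set ts))"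
      using fin by (auto intro!: Max_ge simp: image_iff) (force+)
    then show "a < N \<and> b < N" unfolding N_def by linarith
  qed
  have "hcnt N p = hcnt (Suc n) p"
    unfolding N_def using hcnt_stable[OF fx] by blast
  then show ?thesis using hcnt_le_length[OF bd] ts by simp
qed

lemma qsum:
  "(\<Sum>p\<in>{p. p permutes {1..n}}. (z::real) ^ hcnt (Suc n) p) = (\<Prod>k<n. 1 + real k * z)"
proof (induction n)
  case 0
  have "{p. p permutes ({1..0}::nat set)} = {id}" by (simp add: permutes_empty)
  then show ?case by simp
next
  case (Suc n)
  let ?S = "{p. p permutes {1..n}}"
  have ins: "{1..Suc n} = insert (Suc n) {1..n}" by auto
  have h: "hcnt (Suc (Suc n)) (Transposition.transpose (Suc n) b \<circ> q)
      = hcnt (Suc n) q + (if b = Suc n then 0 else 1)" if "q \<in> ?S" for b q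
  proof -
    have qn: "q (Suc n) = Suc n" using that by (auto simp: permutes_def)
    have "Transposition.transpose (Suc n) b \<circ> (Transposition.transpose (Suc n) b \<circ> q) = q"
      by (auto simp: fun_eq_iff Transposition.transpose_def)
    then show ?thesis using qn by (auto simp: Transposition.transpose_def)
  qed
  have "(\<Sum>p\<in>{p. p permutes {1..Suc n}}. z ^ hcnt (Suc (Suc n)) p)
     = (\<Sum>b\<in>insert (Suc n) {1..n}. \<Sum>q\<in>?S. z ^ hcnt (Suc (Suc n)) (Transposition.transpose (Suc n) b \<circ> q))"
    unfolding ins by (rule sum_over_permutations_insert) auto
  also have "\<dots> = (\<Sum>b\<in>insert (Suc n) {1..n}. (if b = Suc n then 1 else z) * (\<Sum>q\<in>?S. z ^ hcnt (Suc n) q))"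
  proof (rule sum.cong[OF refl])
    fix b
    have "(\<Sum>q\<in>?S. z ^ hcnt (Suc (Suc n)) (Transposition.transpose (Suc n) b \<circ> q))
       = (\<Sum>q\<in>?S. (if b = Suc n then 1 else z) * z ^ hcnt (Suc n) q)"
    proof (rule sum.cong[OF refl])
      fix q assume "q \<in> ?S"
      then show "z ^ hcnt (Suc (Suc n)) (Transposition.transpose (Suc n) b \<circ> q)
         = (if b = Suc n then 1 else z) * z ^ hcnt (Suc n) q"
        by (simp only: h power_add) (simp del: hcnt.simps)
    qed
    then show "(\<Sum>q\<in>?S. z ^ hcnt (Suc (Suc n)) (Transposition.transpose (Suc n) b \<circ> q))
       = (if b = Suc n then 1 else z) * (\<Sum>q\<in>?S. z ^ hcnt (Suc n) q)"
      by (simp only: sum_distrib_left)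
  qed
  also have "\<dots> = (1 + real n * z) * (\<Sum>q\<in>?S. z ^ hcnt (Suc n) q)"
    by (simp add: sum_distrib_right algebra_simps del: hcnt.simps)
  finally show ?case using Suc by (simp add: algebra_simps del: hcnt.simps)
qed


lemma ln_bound:
  fixes x :: real
  assumes "0 \<le> x" "x < 1"
  shows "ln (1 - x) \<le> - x - x^2 / 2"
proof -
  let ?f = "\<lambda>t::real. ln (1 - t) + t + t^2 / 2"
  have "?f x \<le> ?f 0"
  proof (rule DERIV_nonpos_imp_nonincreasing[OF assms(1)])
    fix t :: real assume t: "0 \<le> t" "t \<le> x"
    then have t1: "t < 1" using assms by simp
    have "DERIV ?f t :> (- 1 / (1 - t) + 1 + t)"
      using t1 by (auto intro!: derivative_eq_intros simp: field_simps)
    moreover have "- 1 / (1 - t) + 1 + t = - (t^2) / (1 - t)"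
      using t1 by (simp add: field_simps power2_eq_square)
    moreover have "- (t^2) / (1 - t) \<le> 0"
      using t1 by (simp add: divide_nonpos_pos)
    ultimately show "\<exists>y. DERIV ?f t :> y \<and> y \<le> 0" by metis
  qed
  then show ?thesis by simp
qed

lemma sum_k_bound: "(\<Sum>k<n. real k) \<le> real n ^ 2 / 2"
proof (induction n)
  case (Suc n)
  then show ?case by (simp add: power2_eq_square field_simps)
qed simp

lemma prod_bound:
  fixes z :: real
  assumes "0 < z"
  shows "(\<Prod>k<n. 1 + real k * z) \<le> exp (z * real n ^ 2 / 2)"
proof -
  have "(\<Prod>k<n. 1 + real k * z) \<le> (\<Prod>k<n. exp (real k * z))"
    by (rule prod_mono) (use assms in \<open>auto simp: exp_ge_add_one_self add.commute\<close>)
  also have "\<dots> = exp (\<Sum>k<n. real k * z)" by (simp add: exp_sum)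
  also have "\<dots> \<le> exp (z * real n ^ 2 / 2)"
  proof -
    have "(\<Sum>k<n. real k * z) = z * (\<Sum>k<n. real k)" by (simp add: sum_distrib_left mult.commute)
    also have "\<dots> \<le> z * (real n ^ 2 / 2)" using sum_k_bound assms by (intro mult_left_mono) auto
    finally show ?thesis by simp
  qed
  finally show ?thesis .
qed

theorem lemma4:
  shows "\<exists>C::real. \<forall>(n::nat) (z::real). n \<ge> 1 \<longrightarrow> 0 < z \<longrightarrow> z < 1 / real n \<longrightarrow>
     qpoly n z \<le> C * sqrt (real n) * exp (- real n) * (1 - z * real n) powr (- 1 / z)"
proof (intro exI[of _ 1] allI impI)
  fix n :: nat and z :: real
  assume n: "n \<ge> 1" and z: "0 < z" and zn: "z < 1 / real n"
  have xlt: "z * real n < 1" using zn n by (simp add: field_simps)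
  have x0: "0 \<le> z * real n" using z by simp
  have "1 / real n \<le> 1" using n by simp
  then have z1: "z \<le> 1" using zn by linarith
  have "qpoly n z \<le> (\<Sum>p\<in>{p. p permutes {1..n}}. z ^ hcnt (Suc n) p)"
    unfolding qpoly_def
  proof (rule sum_mono)
    fix p assume "p \<in> {p. p permutes {1..n}}"
    then have "hcnt (Suc n) p \<le> tcount p" using tcount_ge by blast
    then show "z ^ tcount p \<le> z ^ hcnt (Suc n) p"
      using z z1 by (intro power_decreasing) auto
  qed
  also have "\<dots> = (\<Prod>k<n. 1 + real k * z)" by (rule qsum)
  also have "\<dots> \<le> exp (z * real n ^ 2 / 2)" by (rule prod_bound[OF z])
  also have "\<dots> \<le> exp (- real n) * (1 - z * real n) powr (- 1 / z)"
  proof -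
    have l: "ln (1 - z * real n) \<le> - (z * real n) - (z * real n)^2 / 2"
      by (rule ln_bound[OF x0 xlt])
    have "z * real n ^ 2 / 2 \<le> - real n + (- 1 / z) * ln (1 - z * real n)"
    proof -
      have "(- 1 / z) * ln (1 - z * real n) \<ge> (- 1 / z) * (- (z * real n) - (z * real n)^2 / 2)"
        using l z by (intro mult_left_mono_neg) auto
      moreover have "(- 1 / z) * (- (z * real n) - (z * real n)^2 / 2) = real n + z * real n ^ 2 / 2"
        using z by (simp add: field_simps power2_eq_square)
      ultimately show ?thesis by linarith
    qed
    then have "exp (z * real n ^ 2 / 2) \<le> exp (- real n + (- 1 / z) * ln (1 - z * real n))"
      by simp
    also have "\<dots> = exp (- real n) * (1 - z * real n) powr (- 1 / z)"
      using xlt by (simp add: powr_def exp_add[symmetric])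
    finally show ?thesis .
  qed
  also have "\<dots> \<le> 1 * sqrt (real n) * exp (- real n) * (1 - z * real n) powr (- 1 / z)"
  proof -
    have "1 \<le> sqrt (real n)" using n by simp
    moreover have "0 \<le> exp (- real n) * (1 - z * real n) powr (- 1 / z)" by simp
    ultimately have "1 * (exp (- real n) * (1 - z * real n) powr (- 1 / z))
       \<le> sqrt (real n) * (exp (- real n) * (1 - z * real n) powr (- 1 / z))"
      by (rule mult_right_mono)
    then show ?thesis by (simp add: mult.assoc)
  qed
  finally show "qpoly n z \<le> 1 * sqrt (real n) * exp (- real n) * (1 - z * real n) powr (- 1 / z)" .
qed

end
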